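(* Let $\mu$ be a critical offspring distribution and let $X_1,X_2,\dots$ be i.i.d. with $\mathbf P(X_1=i)=\mu_{i+1}$ for $i\ge-1$. Then \[ \mathbf P\Big(\sum_{i=1}^nX_i=-1\Big)=e^{-o(n)} \] as $n\to\infty$ along all $n$ for which this probability is positive.
   Context: An offspring distribution is a probability measure $\mu=(\mu_k)_{k\ge0}$ on $\mathbb Z_+$; it is critical if $\sum_kk\mu_k=1$. *)

theory Defs
  imports "HOL-Probability.Probability"
begin

definition step_pmf :: "nat pmf \<Rightarrow> int pmf" where
  "step_pmf \<mu> = map_pmf (\<lambda>k. int k - 1) \<mu>"

fun walk_pmf :: "nat pmf \<Rightarrow> nat \<Rightarrow> int pmf" where
  "walk_pmf \<mu> 0 = return_pmf 0"
| "walk_pmf \<mu> (Suc n) = bind_pmf (walk_pmf \<mu> n) (\<lambda>s. map_pmf (\<lambda>x. s + x) (step_pmf \<mu>))"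

definition critical :: "nat pmf \<Rightarrow> bool" where
  "critical \<mu> \<longleftrightarrow> (\<lambda>k. real k * pmf \<mu> k) sums 1"

end

theory Submission
  imports Defs
begin

lemma pmf_bind_ge_sum:
  assumes "finite S"
  shows "(\<Sum>s\<in>S. pmf N s * pmf (f s) i) \<le> pmf (bind_pmf N f) i"
proof -
  have "(\<Sum>s\<in>S. pmf N s * pmf (f s) i) = (\<integral>x. pmf (f x) i * indicator S x \<partial>measure_pmf N)"
    by (subst integral_measure_pmf_real[where A=S]) (auto simp: assms mult.commute indicator_def)
  also have "\<dots> \<le> (\<integral>x. pmf (f x) i \<partial>measure_pmf N)"
    by (intro integral_mono measure_pmf.integrable_const_bound[where B=1])
       (auto simp: indicator_def pmf_le_1)
  finally show ?thesis by (simp add: pmf_bind)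
qed

lemma walk_add:
  "walk_pmf \<mu> (m + n) = bind_pmf (walk_pmf \<mu> m) (\<lambda>a. map_pmf ((+) a) (walk_pmf \<mu> n))"
proof (induction n)
  case 0
  then show ?case by (simp add: map_return_pmf bind_return_pmf')
next
  case (Suc n)
  show ?case
    by (simp add: Suc bind_assoc_pmf bind_map_pmf map_bind_pmf map_pmf_comp o_def add.assoc[symmetric])
qed

definition w :: "nat pmf \<Rightarrow> nat \<Rightarrow> int \<Rightarrow> real" where
  "w \<mu> n x = pmf (walk_pmf \<mu> n) x"

lemma w_nonneg: "0 \<le> w \<mu> n x" by (simp add: w_def)
lemma w_le1: "w \<mu> n x \<le> 1" by (simp add: w_def pmf_le_1)

lemma w_super: "w \<mu> m x * w \<mu> n y \<le> w \<mu> (m + n) (x + y)"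
proof -
  have "w \<mu> m x * w \<mu> n y = (\<Sum>s\<in>{x}. pmf (walk_pmf \<mu> m) s * pmf (map_pmf ((+) s) (walk_pmf \<mu> n)) (x+y))"
    by (simp add: w_def pmf_map_inj' inj_def)
  also have "\<dots> \<le> w \<mu> (m + n) (x + y)"
    unfolding w_def walk_add by (rule pmf_bind_ge_sum) simp
  finally show ?thesis .
qed

lemma pmf_step: "pmf (step_pmf \<mu>) (int k - 1) = pmf \<mu> k"
  unfolding step_pmf_def by (rule pmf_map_inj') (auto simp: inj_def)

lemma w_step:
  assumes "finite S"
  shows "(\<Sum>s\<in>S. w \<mu> n s * pmf (step_pmf \<mu>) (x - s)) \<le> w \<mu> (Suc n) x"
proof -
  have "\<And>s. pmf (map_pmf ((+) s) (step_pmf \<mu>)) x = pmf (step_pmf \<mu>) (x - s)"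
  proof -
    fix s
    have "pmf (map_pmf ((+) s) (step_pmf \<mu>)) (s + (x - s)) = pmf (step_pmf \<mu>) (x - s)"
      by (rule pmf_map_inj') (auto simp: inj_def)
    then show "pmf (map_pmf ((+) s) (step_pmf \<mu>)) x = pmf (step_pmf \<mu>) (x - s)" by simp
  qed
  then show ?thesis
    using pmf_bind_ge_sum[OF assms, of "walk_pmf \<mu> n" "\<lambda>s. map_pmf ((+) s) (step_pmf \<mu>)" x]
    by (simp add: w_def)
qed

lemma w_one: "w \<mu> 1 (int k - 1) = pmf \<mu> k"
proof -
  have "(+) (0::int) = (\<lambda>x. x)" by auto
  then show ?thesis by (simp add: w_def bind_return_pmf pmf_step map_pmf_ident)
qed

lemma w_zero: "w \<mu> 0 x = (if x = 0 then 1 else 0)"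
  by (simp add: w_def indicator_def)

lemma w_pow: "(w \<mu> n x) ^ c \<le> w \<mu> (c * n) (of_nat c * x)"
proof (induction c)
  case 0
  then show ?case by (simp add: w_zero)
next
  case (Suc c)
  have "(w \<mu> n x) ^ Suc c = w \<mu> n x * (w \<mu> n x) ^ c" by simp
  also have "\<dots> \<le> w \<mu> n x * w \<mu> (c * n) (of_nat c * x)"
    by (intro mult_left_mono Suc w_nonneg)
  also have "\<dots> \<le> w \<mu> (n + c * n) (x + of_nat c * x)" by (rule w_super)
  finally show ?case by (simp add: algebra_simps)
qed

fun R :: "nat pmf \<Rightarrow> nat \<Rightarrow> nat \<Rightarrow> real" where
  "R \<mu> j 0 = (if j = 0 then 1 else 0)"
| "R \<mu> j (Suc n) = (if j = 0 then 0 else (\<Sum>k\<le>Suc n. pmf \<mu> k * R \<mu> (k + j - 1) n))"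

lemma R_nonneg: "0 \<le> R \<mu> j n"
  by (induction n arbitrary: j) (auto simp del: sum.atMost_Suc intro!: sum_nonneg mult_nonneg_nonneg)

lemma R_vanish: "n < j \<Longrightarrow> R \<mu> j n = 0"
  by (induction n arbitrary: j) auto

lemma R0: "R \<mu> 0 n = (if n = 0 then 1 else 0)"
  by (cases n) auto

lemma R_dom: "R \<mu> j n \<le> w \<mu> n (- int j)"
proof (induction n arbitrary: j)
  case 0
  then show ?case by (simp add: w_zero)
next
  case (Suc n)
  show ?case
  proof (cases "j = 0")
    case True
    then show ?thesis by (simp add: w_nonneg)
  next
    case False
    let ?f = "\<lambda>k::nat. - int (k + j - 1)"
    have inj: "inj_on ?f {..Suc n}" using False by (auto simp: inj_on_def)
    have "R \<mu> j (Suc n) = (\<Sum>k\<le>Suc n. pmf \<mu> k * R \<mu> (k + j - 1) n)" using False by simp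
    also have "\<dots> \<le> (\<Sum>k\<le>Suc n. w \<mu> n (?f k) * pmf (step_pmf \<mu>) (- int j - ?f k))"
    proof (rule sum_mono)
      fix k assume "k \<in> {..Suc n}"
      have "- int j - ?f k = int k - 1" using False by simp
      then show "pmf \<mu> k * R \<mu> (k + j - 1) n \<le> w \<mu> n (?f k) * pmf (step_pmf \<mu>) (- int j - ?f k)"
        using Suc.IH[of "k + j - 1"] by (simp add: pmf_step mult.commute mult_left_mono)
    qed
    also have "\<dots> = (\<Sum>s\<in>?f ` {..Suc n}. w \<mu> n s * pmf (step_pmf \<mu>) (- int j - s))"
      by (simp only: sum.reindex[OF inj] o_def)
    also have "\<dots> \<le> w \<mu> (Suc n) (- int j)" by (rule w_step) simp
    finally show ?thesis .
  qed
qed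

lemma R_mult: "R \<mu> (i + j) n = (\<Sum>m\<le>n. R \<mu> i m * R \<mu> j (n - m))"
proof (induction n arbitrary: i j)
  case 0
  then show ?case by simp
next
  case (Suc n)
  show ?case
  proof (cases "i = 0")
    case True
    have "(\<Sum>m\<le>Suc n. R \<mu> i m * R \<mu> j (Suc n - m)) = (\<Sum>m\<in>{0}. R \<mu> i m * R \<mu> j (Suc n - m))"
      by (rule sum.mono_neutral_right) (auto simp: True R0)
    then show ?thesis by (simp add: True)
  next
    case False
    have "R \<mu> (i + j) (Suc n) = (\<Sum>k\<le>Suc n. pmf \<mu> k * R \<mu> ((k + i - 1) + j) n)"
      using False by (simp add: algebra_simps)
    also have "\<dots> = (\<Sum>k\<le>Suc n. \<Sum>m\<le>n. pmf \<mu> k * (R \<mu> (k + i - 1) m * R \<mu> j (n - m)))"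
      by (simp add: Suc.IH sum_distrib_left)
    also have "\<dots> = (\<Sum>m\<le>n. \<Sum>k\<le>Suc n. pmf \<mu> k * (R \<mu> (k + i - 1) m * R \<mu> j (n - m)))"
      by (rule sum.swap)
    also have "\<dots> = (\<Sum>m\<le>n. R \<mu> i (Suc m) * R \<mu> j (n - m))"
    proof (rule sum.cong[OF refl])
      fix m assume m: "m \<in> {..n}"
      have "(\<Sum>k\<le>Suc n. pmf \<mu> k * (R \<mu> (k + i - 1) m * R \<mu> j (n - m)))
          = (\<Sum>k\<le>Suc m. pmf \<mu> k * (R \<mu> (k + i - 1) m * R \<mu> j (n - m)))"
        using m False by (intro sum.mono_neutral_right) (auto simp: R_vanish)
      also have "\<dots> = R \<mu> i (Suc m) * R \<mu> j (n - m)"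
        using False by (simp add: sum_distrib_left ac_simps distrib_left del: sum.atMost_Suc)
      finally show "(\<Sum>k\<le>Suc n. pmf \<mu> k * (R \<mu> (k + i - 1) m * R \<mu> j (n - m))) = R \<mu> i (Suc m) * R \<mu> j (n - m)" .
    qed
    also have "\<dots> = (\<Sum>m\<le>Suc n. R \<mu> i m * R \<mu> j (Suc n - m))"
      by (simp only: sum.atMost_Suc_shift) (simp add: False)
    finally show ?thesis .
  qed
qed

lemma R_gen:
  assumes s: "0 \<le> s" and sm: "summable (\<lambda>n. R \<mu> 1 n * s^n)"
  shows "(\<lambda>n. R \<mu> k n * s^n) sums ((\<Sum>n. R \<mu> 1 n * s^n) ^ k)"
proof (induction k)
  case 0
  have "(\<lambda>n. R \<mu> 0 n * s^n) = (\<lambda>n. if n = 0 then 1 else 0)"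
    by (auto simp: R0)
  then show ?case using sums_single[of 0 "\<lambda>_. 1::real"] by simp
next
  case (Suc k)
  have eq: "(\<lambda>n. R \<mu> (Suc k) n * s^n) = (\<lambda>n. \<Sum>m\<le>n. (R \<mu> 1 m * s^m) * (R \<mu> k (n - m) * s^(n-m)))"
  proof
    fix n
    have "R \<mu> (Suc k) n * s^n = (\<Sum>m\<le>n. R \<mu> 1 m * R \<mu> k (n - m)) * s^n"
      using R_mult[of \<mu> 1 k n] by simp
    also have "\<dots> = (\<Sum>m\<le>n. (R \<mu> 1 m * s^m) * (R \<mu> k (n - m) * s^(n-m)))"
      unfolding sum_distrib_right
    proof (rule sum.cong[OF refl])
      fix m assume "m \<in> {..n}"
      then have "s^n = s^m * s^(n-m)" by (simp flip: power_add)
      then show "R \<mu> 1 m * R \<mu> k (n - m) * s ^ n = R \<mu> 1 m * s ^ m * (R \<mu> k (n - m) * s ^ (n - m))"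
        by (simp add: ac_simps)
    qed
    finally show "R \<mu> (Suc k) n * s^n = (\<Sum>m\<le>n. (R \<mu> 1 m * s^m) * (R \<mu> k (n - m) * s^(n-m)))" .
  qed
  have nn: "\<And>j. (\<lambda>n. norm (R \<mu> j n * s^n)) = (\<lambda>n. R \<mu> j n * s^n)"
    using s by (auto intro!: abs_of_nonneg mult_nonneg_nonneg R_nonneg)
  have n1: "summable (\<lambda>n. norm (R \<mu> 1 n * s^n))"
    using sm by (simp only: nn)
  have n2: "summable (\<lambda>n. norm (R \<mu> k n * s^n))"
    using sums_summable[OF Suc] by (simp only: nn)
  have "(\<lambda>n. \<Sum>m\<le>n. (R \<mu> 1 m * s^m) * (R \<mu> k (n - m) * s^(n-m))) sums ((\<Sum>n. R \<mu> 1 n * s^n) * (\<Sum>n. R \<mu> 1 n * s^n) ^ k)"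
    using Cauchy_product_sums[OF n1 n2] unfolding sums_unique[OF Suc, symmetric] by simp
  then show ?case unfolding eq by simp
qed

lemma R_ineq:
  assumes s: "0 \<le> s" and sm: "summable (\<lambda>n. R \<mu> 1 n * s^n)"
  shows "s * (\<Sum>k\<le>K. pmf \<mu> k * (\<Sum>n. R \<mu> 1 n * s^n) ^ k) \<le> (\<Sum>n. R \<mu> 1 n * s^n)"
proof -
  let ?y = "\<Sum>n. R \<mu> 1 n * s^n"
  have sk: "\<And>k. summable (\<lambda>n. R \<mu> k n * s^n)"
    using R_gen[OF s sm] by (rule sums_summable)
  have yk: "\<And>k. (\<Sum>n. R \<mu> k n * s^n) = ?y ^ k"
    using R_gen[OF s sm] by (rule sums_unique[symmetric])
  have le: "s * (\<Sum>k\<le>K. pmf \<mu> k * (R \<mu> k n * s^n)) \<le> R \<mu> 1 (Suc n) * s^(Suc n)" for n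
  proof -
    let ?f = "\<lambda>k. pmf \<mu> k * R \<mu> k n"
    have "(\<Sum>k\<le>K. ?f k) \<le> (\<Sum>k\<le>max K (Suc n). ?f k)"
      by (intro sum_mono2) (auto intro!: mult_nonneg_nonneg R_nonneg)
    also have "\<dots> = (\<Sum>k\<le>Suc n. ?f k)"
      by (intro sum.mono_neutral_right) (auto simp: R_vanish)
    also have "\<dots> = R \<mu> 1 (Suc n)" by (simp del: sum.atMost_Suc)
    finally have "(\<Sum>k\<le>K. ?f k) * (s * s^n) \<le> R \<mu> 1 (Suc n) * (s * s^n)"
      by (intro mult_right_mono) (auto simp: s)
    then show ?thesis by (simp add: sum_distrib_right sum_distrib_left ac_simps)
  qed
  have smf: "summable (\<lambda>n. \<Sum>k\<le>K. pmf \<mu> k * (R \<mu> k n * s^n))"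
    by (intro summable_sum summable_mult sk)
  have "(\<Sum>n. s * (\<Sum>k\<le>K. pmf \<mu> k * (R \<mu> k n * s^n))) = s * (\<Sum>n. \<Sum>k\<le>K. pmf \<mu> k * (R \<mu> k n * s^n))"
    by (rule suminf_mult[OF smf])
  also have "(\<Sum>n. \<Sum>k\<le>K. pmf \<mu> k * (R \<mu> k n * s^n)) = (\<Sum>k\<le>K. \<Sum>n. pmf \<mu> k * (R \<mu> k n * s^n))"
    by (rule suminf_sum) (intro summable_mult sk)
  also have "\<dots> = (\<Sum>k\<le>K. pmf \<mu> k * ?y ^ k)"
  proof (rule sum.cong[OF refl])
    fix k
    show "(\<Sum>n. pmf \<mu> k * (R \<mu> k n * s^n)) = pmf \<mu> k * ?y ^ k"
      using yk[of k] by (simp add: suminf_mult[OF sk])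
  qed
  finally have "s * (\<Sum>k\<le>K. pmf \<mu> k * ?y ^ k) = (\<Sum>n. s * (\<Sum>k\<le>K. pmf \<mu> k * (R \<mu> k n * s^n)))"
    by simp
  also have "\<dots> \<le> (\<Sum>n. R \<mu> 1 (Suc n) * s^(Suc n))"
  proof (rule suminf_le[OF le])
    show "summable (\<lambda>n. s * (\<Sum>k\<le>K. pmf \<mu> k * (R \<mu> k n * s^n)))"
      by (intro summable_mult smf)
    show "summable (\<lambda>n. R \<mu> 1 (Suc n) * s^(Suc n))"
      using summable_Suc_iff[where f="\<lambda>n. R \<mu> 1 n * s^n"] sm by simp
  qed
  also have "\<dots> = ?y" using suminf_split_head[OF sm] by simp
  finally show ?thesis .
qed

lemma pmf_sums1: "(\<lambda>k. pmf \<mu> k) sums 1"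
  using sums_infsetsum_nat[OF pmf_abs_summable[of \<mu> UNIV]] infsetsum_pmf_eq_1[of \<mu> UNIV] by simp

lemma R11: "R \<mu> 1 1 = pmf \<mu> 0"
  by (simp add: numeral_eq_Suc)

lemma no_summable:
  assumes crit: "critical \<mu>" and p0: "pmf \<mu> 0 > 0" and s: "s > 1"
  shows "\<not> summable (\<lambda>n. R \<mu> 1 n * s^n)"
proof
  assume sm: "summable (\<lambda>n. R \<mu> 1 n * s^n)"
  define y where "y = (\<Sum>n. R \<mu> 1 n * s^n)"
  have "(\<Sum>n\<in>{1}. R \<mu> 1 n * s^n) \<le> y"
    unfolding y_def using s by (intro sum_le_suminf sm) (auto intro!: mult_nonneg_nonneg R_nonneg)
  then have "pmf \<mu> 0 * s \<le> y" by (simp add: R11)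
  moreover have "0 < pmf \<mu> 0 * s" using p0 s by simp
  ultimately have ypos: "0 < y" by linarith
  have bern: "s * (\<Sum>k\<le>K. pmf \<mu> k + (y - 1) * (real k * pmf \<mu> k)) \<le> y" for K
  proof -
    have "(\<Sum>k\<le>K. pmf \<mu> k + (y - 1) * (real k * pmf \<mu> k)) \<le> (\<Sum>k\<le>K. pmf \<mu> k * y ^ k)"
    proof (rule sum_mono)
      fix k
      have "1 + real k * (y - 1) \<le> (1 + (y - 1)) ^ k"
        using ypos by (intro Bernoulli_inequality) simp
      then have "pmf \<mu> k * (1 + real k * (y - 1)) \<le> pmf \<mu> k * y ^ k"
        by (intro mult_left_mono) auto
      then show "pmf \<mu> k + (y - 1) * (real k * pmf \<mu> k) \<le> pmf \<mu> k * y ^ k"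
        by (simp add: algebra_simps)
    qed
    then have "s * (\<Sum>k\<le>K. pmf \<mu> k + (y - 1) * (real k * pmf \<mu> k)) \<le> s * (\<Sum>k\<le>K. pmf \<mu> k * y ^ k)"
      using s by (intro mult_left_mono) auto
    also have "\<dots> \<le> y" unfolding y_def using R_ineq[of s \<mu> K] s sm by simp
    finally show ?thesis .
  qed
  have "(\<lambda>k. pmf \<mu> k + (y - 1) * (real k * pmf \<mu> k)) sums (1 + (y - 1) * 1)"
    using crit unfolding critical_def by (intro sums_add pmf_sums1 sums_mult)
  then have "(\<lambda>K. (\<Sum>k\<le>K. pmf \<mu> k + (y - 1) * (real k * pmf \<mu> k))) \<longlonglongrightarrow> y"
    by (simp add: sums_def_le)
  then have "(\<lambda>K. s * (\<Sum>k\<le>K. pmf \<mu> k + (y - 1) * (real k * pmf \<mu> k))) \<longlonglongrightarrow> s * y"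
    by (intro tendsto_mult tendsto_const)
  then have "s * y \<le> y" by (rule LIMSEQ_le_const2) (use bern in auto)
  then show False using s ypos by (simp add: mult_le_cancel_right1)
qed

lemma R_large:
  assumes crit: "critical \<mu>" and p0: "pmf \<mu> 0 > 0" and e: "e > 0"
  shows "\<exists>n\<ge>N. exp (- e * n) \<le> R \<mu> 1 n"
proof (rule ccontr)
  assume "\<not> ?thesis"
  then have lt: "\<And>n. n \<ge> N \<Longrightarrow> R \<mu> 1 n < exp (- e * n)" by (meson not_le)
  define s where "s = exp (e / 2)"
  have s1: "s > 1" using e by (simp add: s_def)
  have "summable (\<lambda>n. R \<mu> 1 n * s^n)"
  proof (rule summable_comparison_test')
    show "summable (\<lambda>n. exp (- e / 2) ^ n)" using e by (intro summable_geometric) simp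
    fix n assume "n \<ge> N"
    have "norm (R \<mu> 1 n * s^n) = R \<mu> 1 n * s^n" using s1 by (simp add: R_nonneg)
    also have "\<dots> \<le> exp (- e * n) * s^n"
      using lt[OF \<open>n \<ge> N\<close>] s1 by (intro mult_right_mono) auto
    also have "\<dots> = exp (- e / 2) ^ n"
      by (simp add: s_def flip: exp_of_nat_mult exp_add)
    finally show "norm (R \<mu> 1 n * s^n) \<le> exp (- e / 2) ^ n" .
  qed
  with no_summable[OF crit p0 s1] show False by simp
qed

lemma walk_nonneg:
  assumes "pmf \<mu> 0 = 0"
  shows "set_pmf (walk_pmf \<mu> n) \<subseteq> {0..}"
proof (induction n)
  case 0
  then show ?case by simp
next
  case (Suc n)
  have "\<And>k. k \<in> set_pmf \<mu> \<Longrightarrow> k \<noteq> 0" using assms by (metis set_pmf_iff)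
  then have "set_pmf (step_pmf \<mu>) \<subseteq> {0..}" by (force simp: step_pmf_def)
  then show ?case using Suc by (force simp: step_pmf_def)
qed

lemma exists_k:
  assumes crit: "critical \<mu>" and p0: "pmf \<mu> 0 > 0"
  shows "\<exists>k\<ge>2. pmf \<mu> k > 0"
proof (rule ccontr)
  assume "\<not> ?thesis"
  then have z: "\<And>k. k \<ge> 2 \<Longrightarrow> pmf \<mu> k = 0" by (meson not_le pmf_nonneg order.not_eq_order_implies_strict)
  have "(\<lambda>k. real k * pmf \<mu> k) = (\<lambda>k. if k = 1 then pmf \<mu> 1 else 0)"
  proof
    fix k show "real k * pmf \<mu> k = (if k = 1 then pmf \<mu> 1 else 0)"
      using z[of k] by (cases "k = 0 \<or> k = 1") auto
  qed
  then have "(\<lambda>k. real k * pmf \<mu> k) sums pmf \<mu> 1" using sums_single[of 1 "\<lambda>_. pmf \<mu> 1"] by simp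
  then have p1: "pmf \<mu> 1 = 1" using crit unfolding critical_def using sums_unique2 by blast
  have "(\<Sum>k\<in>{0,1}. pmf \<mu> k) \<le> (\<Sum>k. pmf \<mu> k)"
    by (intro sum_le_suminf) (auto intro: sums_summable[OF pmf_sums1])
  then have "pmf \<mu> 0 + pmf \<mu> 1 \<le> 1" using sums_unique[OF pmf_sums1[of \<mu>]] by simp
  then show False using p0 p1 by simp
qed

lemma q_large:
  assumes crit: "critical \<mu>" and p0: "pmf \<mu> 0 > 0" and e: "e > 0"
  shows "\<exists>g\<ge>1. exp (- e * g) \<le> w \<mu> g 0"
proof -
  obtain k where k: "k \<ge> 2" "pmf \<mu> k > 0" using exists_k[OF crit p0] by blast
  define e' where "e' = e / 2"
  have e': "e' > 0" using e by (simp add: e'_def)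
  define N where "N = nat \<lceil>- ln (pmf \<mu> k) / e'\<rceil> + 1"
  obtain n where n: "n \<ge> N" "exp (- e' * n) \<le> R \<mu> 1 n" using R_large[OF crit p0 e'] by blast
  define g where "g = 1 + (k - 1) * n"
  have "1 * n \<le> (k - 1) * n" using k by (intro mult_le_mono1) simp
  then have "n \<le> g" unfolding g_def by linarith
  have "- ln (pmf \<mu> k) / e' < N" unfolding N_def by linarith
  also have "\<dots> \<le> g" using n \<open>n \<le> g\<close> by simp
  finally have "- ln (pmf \<mu> k) < e' * g" using e' by (simp add: field_simps)
  then have "exp (- e' * g) < exp (ln (pmf \<mu> k))" by simp
  then have pk: "exp (- e' * g) \<le> pmf \<mu> k" using k by simp
  have "exp (- e' * ((k - 1) * n)) = exp (- e' * n) ^ (k - 1)"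
    by (simp flip: exp_of_nat_mult add: ac_simps)
  also have "\<dots> \<le> R \<mu> 1 n ^ (k - 1)" using n by (intro power_mono) auto
  also have "\<dots> \<le> w \<mu> n (-1) ^ (k - 1)"
    using R_dom[of \<mu> 1 n] by (intro power_mono) (auto intro: R_nonneg)
  also have "\<dots> \<le> w \<mu> ((k - 1) * n) (of_nat (k - 1) * (-1))" by (rule w_pow)
  finally have A: "exp (- e' * ((k - 1) * n)) \<le> w \<mu> ((k - 1) * n) (- (int k - 1))"
    using k by (simp add: of_nat_diff)
  have B: "exp (- e' * g) \<le> exp (- e' * ((k - 1) * n))"
    using e' by (simp add: g_def)
  have "exp (- e * g) = exp (- e' * g) * exp (- e' * g)"
    by (simp add: e'_def flip: exp_add)
  also have "\<dots> \<le> pmf \<mu> k * w \<mu> ((k - 1) * n) (- (int k - 1))"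
    using pk order.trans[OF B A] by (intro mult_mono) (auto intro: w_nonneg)
  also have "\<dots> = w \<mu> 1 (int k - 1) * w \<mu> ((k - 1) * n) (- (int k - 1))" using w_one[of \<mu> k] by simp
  also have "\<dots> \<le> w \<mu> (1 + (k - 1) * n) ((int k - 1) + - (int k - 1))" by (rule w_super)
  finally have "exp (- e * g) \<le> w \<mu> g 0" by (simp add: g_def)
  then show ?thesis by (intro exI[of _ g]) (simp add: g_def)
qed

lemma lower_bound:
  assumes crit: "critical \<mu>" and p0: "pmf \<mu> 0 > 0" and eps: "\<epsilon> > 0"
  shows "\<exists>C>0. \<forall>n. 0 < w \<mu> n (-1) \<longrightarrow> C * exp (- \<epsilon> * n) \<le> w \<mu> n (-1)"
proof -
  obtain g where g: "g \<ge> 1" "exp (- \<epsilon> * g) \<le> w \<mu> g 0" using q_large[OF crit p0 eps] by blast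
  define P where "P = {n. 0 < w \<mu> n (-1)}"
  define rep where "rep r = (LEAST h. h \<in> P \<and> h mod g = r)" for r
  define F where "F = rep ` {r. r < g \<and> (\<exists>h\<in>P. h mod g = r)}"
  have finF: "finite F" unfolding F_def by simp
  have repP: "rep (n mod g) \<in> P \<and> rep (n mod g) mod g = n mod g \<and> rep (n mod g) \<le> n" if "n \<in> P" for n
  proof -
    have "(\<lambda>h. h \<in> P \<and> h mod g = n mod g) (LEAST h. h \<in> P \<and> h mod g = n mod g)"
      by (rule LeastI[of _ n]) (use that in auto)
    moreover have "(LEAST h. h \<in> P \<and> h mod g = n mod g) \<le> n"
      by (rule Least_le) (use that in auto)
    ultimately show ?thesis unfolding rep_def by auto
  qed
  have FP: "F \<subseteq> P" unfolding F_def using repP by auto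
  show ?thesis
  proof (cases "P = {}")
    case True
    then show ?thesis unfolding P_def by (intro exI[of _ 1]) auto
  next
    case False
    then obtain n0 where "n0 \<in> P" by blast
    have Fne: "F \<noteq> {}" unfolding F_def using \<open>n0 \<in> P\<close> g by (auto intro!: exI[of _ "n0 mod g"])
    define C where "C = Min ((\<lambda>h. w \<mu> h (-1)) ` F)"
    have Cpos: "C > 0" unfolding C_def using finF Fne FP by (auto simp: P_def)
    have CF: "C \<le> w \<mu> h (-1)" if "h \<in> F" for h unfolding C_def using finF that by simp
    show ?thesis
    proof (intro exI[of _ C] conjI allI impI Cpos)
      fix n assume "0 < w \<mu> n (-1)"
      then have nP: "n \<in> P" by (simp add: P_def)
      define h where "h = rep (n mod g)"
      have hP: "h \<in> P" and hmod: "h mod g = n mod g" and hn: "h \<le> n"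
        using repP[OF nP] by (auto simp: h_def)
      have "h \<in> F" unfolding F_def h_def using nP g by auto
      then have Ch: "C \<le> w \<mu> h (-1)" by (rule CF)
      have "g dvd n - h" using hmod hn mod_eq_dvd_iff_nat[of h n g] by simp
      then obtain c where c: "n - h = g * c" by (auto elim: dvdE)
      have nhc: "n = h + c * g" using c hn by (simp add: ac_simps)
      have "C * exp (- \<epsilon> * n) \<le> C * exp (- \<epsilon> * g) ^ c"
      proof -
        have "exp (- \<epsilon> * g) ^ c = exp (- \<epsilon> * (c * g))" by (simp flip: exp_of_nat_mult add: ac_simps)
        moreover have "real (c * g) \<le> real n" using nhc by simp
        ultimately show ?thesis using Cpos eps by (simp add: mult_le_cancel_left_pos)
      qed
      also have "\<dots> \<le> w \<mu> h (-1) * w \<mu> g 0 ^ c"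
        using Ch g Cpos by (intro mult_mono power_mono) auto
      also have "\<dots> \<le> w \<mu> h (-1) * w \<mu> (c * g) (of_nat c * 0)"
        by (intro mult_left_mono w_pow w_nonneg)
      also have "\<dots> \<le> w \<mu> (h + c * g) (-1 + of_nat c * 0)" by (rule w_super)
      finally show "C * exp (- \<epsilon> * n) \<le> w \<mu> n (-1)" using nhc by simp
    qed
  qed
qed

theorem mainTheorem12:
  fixes \<mu> :: "nat pmf"
  assumes "critical \<mu>"
  shows "((\<lambda>n. ln (pmf (walk_pmf \<mu> n) (-1)) / real n) \<longlongrightarrow> 0)
           (inf sequentially (principal {n. pmf (walk_pmf \<mu> n) (-1) > 0}))"
proof (cases "pmf \<mu> 0 = 0")
  case True
  have "{n. pmf (walk_pmf \<mu> n) (-1) > 0} = {}"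
  proof -
    have "\<And>n. pmf (walk_pmf \<mu> n) (-1) = 0"
      using walk_nonneg[OF True] by (metis atLeast_iff neg_0_le_iff_le not_one_le_zero set_pmf_iff subsetD)
    then show ?thesis by auto
  qed
  then show ?thesis by simp
next
  case False
  then have p0: "pmf \<mu> 0 > 0" using pmf_nonneg[of \<mu> 0] by linarith
  show ?thesis
    unfolding tendsto_iff eventually_inf_principal eventually_sequentially
  proof (intro allI impI)
    fix e :: real assume e: "e > 0"
    define \<epsilon> where "\<epsilon> = e / 2"
    have eps: "\<epsilon> > 0" using e by (simp add: \<epsilon>_def)
    obtain C where C: "C > 0" "\<And>n. 0 < w \<mu> n (-1) \<Longrightarrow> C * exp (- \<epsilon> * n) \<le> w \<mu> n (-1)"
      using lower_bound[OF assms p0 eps] by blast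
    define N where "N = nat \<lceil>- ln C / \<epsilon>\<rceil> + 1"
    show "\<exists>N. \<forall>n\<ge>N. n \<in> {n. pmf (walk_pmf \<mu> n) (-1) > 0} \<longrightarrow>
            dist (ln (pmf (walk_pmf \<mu> n) (-1)) / real n) 0 < e"
    proof (intro exI[of _ N] allI impI)
      fix n assume nN: "n \<ge> N" and nP: "n \<in> {n. pmf (walk_pmf \<mu> n) (-1) > 0}"
      define p where "p = w \<mu> n (-1)"
      have pp: "p > 0" using nP by (simp add: p_def w_def)
      have p1: "p \<le> 1" by (simp add: p_def w_le1)
      have npos: "real n > 0" using nN N_def by simp
      have "C * exp (- \<epsilon> * n) \<le> p" using C(2) pp by (simp add: p_def)
      then have "ln (C * exp (- \<epsilon> * n)) \<le> ln p" using C pp by (subst ln_le_cancel_iff) auto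
      then have lo: "ln C - \<epsilon> * n \<le> ln p" using C by (simp add: ln_mult)
      have hi: "ln p \<le> 0" using pp p1 by simp
      have "- ln C / \<epsilon> < N" unfolding N_def by linarith
      then have "- ln C / \<epsilon> < n" using nN by linarith
      then have "- ln C < \<epsilon> * n" using eps by (simp add: field_simps)
      then have "- ln p < e * n" using lo by (simp add: \<epsilon>_def)
      then have "- ln p / n < e" using npos by (simp add: field_simps)
      moreover have "dist (ln p / real n) 0 = - ln p / n" using hi npos by (simp add: abs_div)
      ultimately show "dist (ln (pmf (walk_pmf \<mu> n) (-1)) / real n) 0 < e" by (simp add: p_def w_def)
    qed
  qed
qed

end
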